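(* Let $D'$ be a digraph and $T$ a 1-optimal out-branching of $D'$. For each $v\in V(T)$ define the bag $X_v=\{u,v\}\cup \mathrm{BrSucc}(T)\cup\mathrm{Leaf}(T)\cup\mathrm{Head}(\mathrm{Back}_{D'}^T(v))$, where $u$ is the in-neighbor of $v$ in $T$ (and $u$ is omitted if $v$ is the root of $T$). Then $(\{X_v: v\in V(T)\}, T)$, with $T$ regarded as an undirected tree, is a tree decomposition of $D'$ (with arc directions ignored).
   Context: An out-tree is a subgraph that is a tree (ignoring directions) with one vertex (the root) of in-degree $0$ and all others of in-degree $1$; an out-branching is a spanning out-tree. $\mathrm{Leaf}(T)$ is the set of vertices of out-degree $0$ in $T$; a branch vertex has out-degree at least $2$ in $T$; $\mathrm{BrSucc}(T)$ is the set of vertices whose in-neighbor in $T$ is a branch vertex. Write $u\preceq_T v$ if $v$ is reachable from $u$ in $T$, $u\prec_T v$ if also $u\ne v$. $\mathrm{Back}_{D'}^T(z)=\{(a,b)\in A(D'): b\prec_T z\preceq_T a\}$, and $\mathrm{Head}(B)$ is the set of heads of arcs of $B$. For an arc $(a,b)\in A(D')\setminus A(T)$ with $b$ not the root, the 1-change for $(a,b)$ replaces the arc of $T$ entering $b$ by $(a,b)$. $T$ is 1-optimal if no 1-change yields an out-branching with more leaves. A tree decomposition of a digraph is a pair consisting of a tree $U$ and bags $X_i\subseteq V$ ($i\in V(U)$) covering all vertices, such that each arc has both endpoints in some bag and, for each vertex, the nodes whose bags contain it form a subtree of $U$. *)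

theory Defs
  imports Main
begin

definition digraph :: "'a set \<Rightarrow> ('a \<times> 'a) set \<Rightarrow> bool" where
  "digraph V A \<longleftrightarrow> finite V \<and> A \<subseteq> V \<times> V"

definition uconnected :: "'a set \<Rightarrow> 'a set set \<Rightarrow> bool" where
  "uconnected S E \<longleftrightarrow>
     (\<forall>i\<in>S. \<forall>j\<in>S. (i, j) \<in> {(p, q). p \<in> S \<and> q \<in> S \<and> {p, q} \<in> E}\<^sup>*)"

definition has_ucycle :: "'a set \<Rightarrow> 'a set set \<Rightarrow> bool" where
  "has_ucycle N E \<longleftrightarrow> (\<exists>vs. length vs \<ge> 3 \<and> distinct vs \<and> set vs \<subseteq> N \<and>
      (\<forall>i. Suc i < length vs \<longrightarrow> {vs ! i, vs ! Suc i} \<in> E) \<and> {last vs, hd vs} \<in> E)"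

definition utree :: "'a set \<Rightarrow> 'a set set \<Rightarrow> bool" where
  "utree N E \<longleftrightarrow> finite N \<and> N \<noteq> {} \<and>
     (\<forall>e\<in>E. \<exists>a b. e = {a, b} \<and> a \<noteq> b \<and> a \<in> N \<and> b \<in> N) \<and>
     uconnected N E \<and> \<not> has_ucycle N E"

definition uedges :: "('a \<times> 'a) set \<Rightarrow> 'a set set" where
  "uedges B = {{a, b} | a b. (a, b) \<in> B}"

definition indeg :: "('a \<times> 'a) set \<Rightarrow> 'a \<Rightarrow> nat" where
  "indeg B v = card {u. (u, v) \<in> B}"

definition outdeg :: "('a \<times> 'a) set \<Rightarrow> 'a \<Rightarrow> nat" where
  "outdeg B v = card {w. (v, w) \<in> B}"

definition out_tree :: "'a set \<Rightarrow> ('a \<times> 'a) set \<Rightarrow> bool" where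
  "out_tree VT B \<longleftrightarrow> B \<subseteq> VT \<times> VT \<and> utree VT (uedges B) \<and>
     (\<exists>r\<in>VT. indeg B r = 0 \<and> (\<forall>v\<in>VT - {r}. indeg B v = 1))"

definition out_branching :: "'a set \<Rightarrow> ('a \<times> 'a) set \<Rightarrow> ('a \<times> 'a) set \<Rightarrow> bool" where
  "out_branching V A T \<longleftrightarrow> T \<subseteq> A \<and> out_tree V T"

definition out_root :: "'a set \<Rightarrow> ('a \<times> 'a) set \<Rightarrow> 'a" where
  "out_root V T = (THE r. r \<in> V \<and> indeg T r = 0)"

definition Leaf :: "'a set \<Rightarrow> ('a \<times> 'a) set \<Rightarrow> 'a set" where
  "Leaf V T = {v \<in> V. outdeg T v = 0}"

definition branch_vertex :: "('a \<times> 'a) set \<Rightarrow> 'a \<Rightarrow> bool" where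
  "branch_vertex T v \<longleftrightarrow> outdeg T v \<ge> 2"

definition BrSucc :: "('a \<times> 'a) set \<Rightarrow> 'a set" where
  "BrSucc T = {w. \<exists>v. (v, w) \<in> T \<and> branch_vertex T v}"

definition preceq :: "('a \<times> 'a) set \<Rightarrow> 'a \<Rightarrow> 'a \<Rightarrow> bool" where
  "preceq T u v \<longleftrightarrow> (u, v) \<in> T\<^sup>*"

definition prec :: "('a \<times> 'a) set \<Rightarrow> 'a \<Rightarrow> 'a \<Rightarrow> bool" where
  "prec T u v \<longleftrightarrow> preceq T u v \<and> u \<noteq> v"

definition Back :: "('a \<times> 'a) set \<Rightarrow> ('a \<times> 'a) set \<Rightarrow> 'a \<Rightarrow> ('a \<times> 'a) set" where
  "Back A T z = {(a, b) \<in> A. prec T b z \<and> preceq T z a}"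

definition Head :: "('a \<times> 'a) set \<Rightarrow> 'a set" where
  "Head B = snd ` B"

definition one_change :: "('a \<times> 'a) set \<Rightarrow> 'a \<times> 'a \<Rightarrow> ('a \<times> 'a) set" where
  "one_change T e = {(x, y) \<in> T. y \<noteq> snd e} \<union> {e}"

definition one_optimal :: "'a set \<Rightarrow> ('a \<times> 'a) set \<Rightarrow> ('a \<times> 'a) set \<Rightarrow> bool" where
  "one_optimal V A T \<longleftrightarrow> out_branching V A T \<and>
     (\<forall>(a, b) \<in> A - T. b \<noteq> out_root V T \<longrightarrow>
        out_branching V A (one_change T (a, b)) \<longrightarrow>
        \<not> card (Leaf V (one_change T (a, b))) > card (Leaf V T))"

definition tree_decomposition ::
  "'a set \<Rightarrow> ('a \<times> 'a) set \<Rightarrow> 'i set \<Rightarrow> 'i set set \<Rightarrow> ('i \<Rightarrow> 'a set) \<Rightarrow> bool" where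
  "tree_decomposition V A N E X \<longleftrightarrow> utree N E \<and>
     (\<forall>i\<in>N. X i \<subseteq> V) \<and> (\<Union>i\<in>N. X i) = V \<and>
     (\<forall>(x, y)\<in>A. \<exists>i\<in>N. x \<in> X i \<and> y \<in> X i) \<and>
     (\<forall>x\<in>V. uconnected {i \<in> N. x \<in> X i} E)"

end

theory Submission
  imports Defs
begin

definition rooted :: "'a set \<Rightarrow> ('a \<times> 'a) set \<Rightarrow> 'a \<Rightarrow> bool" where
  "rooted V T r \<longleftrightarrow> finite V \<and> T \<subseteq> V \<times> V \<and> r \<in> V \<and> (\<forall>u. (u, r) \<notin> T) \<and>
     (\<forall>v\<in>V - {r}. \<exists>!u. (u, v) \<in> T) \<and> (\<forall>v\<in>V. (r, v) \<in> T\<^sup>*)"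

definition dep :: "('a \<times> 'a) set \<Rightarrow> 'a \<Rightarrow> 'a \<Rightarrow> nat" where
  "dep T r v = (THE n. (r, v) \<in> T ^^ n)"

lemma rooted_pow_unique:
  assumes R: "rooted V T r"
  shows "(r, v) \<in> T ^^ n \<Longrightarrow> (r, v) \<in> T ^^ m \<Longrightarrow> n = m"
proof (induction n arbitrary: m v)
  case 0
  then have v: "v = r" by simp
  show ?case
  proof (cases m)
    case 0 then show ?thesis by simp
  next
    case (Suc k)
    with 0 obtain q where "(q, v) \<in> T" by (meson relpow_Suc_E)
    with v R show ?thesis unfolding rooted_def by blast
  qed
next
  case (Suc n)
  from Suc.prems(1) obtain q where q1: "(r, q) \<in> T ^^ n" and q2: "(q, v) \<in> T" by (meson relpow_Suc_E)
  show ?case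
  proof (cases m)
    case 0 with Suc.prems(2) have "v = r" by simp
    with q2 R show ?thesis unfolding rooted_def by blast
  next
    case (Suc k)
    with Suc.prems(2) obtain q' where q1': "(r, q') \<in> T ^^ k" and q2': "(q', v) \<in> T" by (meson relpow_Suc_E)
    have "v \<in> V" "v \<noteq> r" using q2 R unfolding rooted_def by blast+
    then have "q = q'" using q2 q2' R unfolding rooted_def by blast
    with Suc.IH[OF q1] q1' Suc show ?thesis by simp
  qed
qed

lemma dep_eq:
  assumes R: "rooted V T r" and "(r, v) \<in> T ^^ n"
  shows "dep T r v = n"
  unfolding dep_def using rooted_pow_unique[OF R] assms(2) by (metis the_equality)

lemma dep_arc:
  assumes R: "rooted V T r" and a: "(p, c) \<in> T"
  shows "dep T r c = Suc (dep T r p)"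
proof -
  have "p \<in> V" using R a unfolding rooted_def by blast
  then have "(r, p) \<in> T\<^sup>*" using R unfolding rooted_def by blast
  then obtain n where n: "(r, p) \<in> T ^^ n" using rtrancl_power by blast
  then have "(r, c) \<in> T ^^ Suc n" using a by auto
  then show ?thesis using dep_eq[OF R n] dep_eq[OF R] by simp
qed

lemma dep_mono:
  assumes R: "rooted V T r" and "(x, y) \<in> T\<^sup>*"
  shows "dep T r x \<le> dep T r y"
  using assms(2)
proof (induction rule: rtrancl_induct)
  case base then show ?case by simp
next
  case (step y z) then show ?case using dep_arc[OF R step(2)] by simp
qed

lemma no_loop: assumes R: "rooted V T r" shows "(v, v) \<notin> T"
  using dep_arc[OF R, of v v] by auto

lemma no_ucycle:
  assumes R: "rooted V T r" shows "\<not> has_ucycle V (uedges T)"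
proof
  assume "has_ucycle V (uedges T)"
  then obtain vs where len: "length vs \<ge> 3" and dist: "distinct vs" and sub: "set vs \<subseteq> V"
    and adj: "\<forall>i. Suc i < length vs \<longrightarrow> {vs!i, vs!Suc i} \<in> uedges T"
    and cl: "{last vs, hd vs} \<in> uedges T" unfolding has_ucycle_def by blast
  define M where "M = Max (dep T r ` set vs)"
  have ne: "vs \<noteq> []" using len by auto
  have "M \<in> dep T r ` set vs" unfolding M_def using ne by (intro Max_in) auto
  then obtain i where i: "i < length vs" "dep T r (vs!i) = M" by (metis imageE in_set_conv_nth)
  have mx: "\<And>j. j < length vs \<Longrightarrow> dep T r (vs!j) \<le> M" unfolding M_def by (intro Max_ge) auto
  have par: "(vs!j, vs!i) \<in> T" if j: "j < length vs" "j \<noteq> i" and e: "{vs!i, vs!j} \<in> uedges T" for j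
  proof -
    from e obtain a b where ab: "{vs!i, vs!j} = {a, b}" "(a, b) \<in> T" unfolding uedges_def by blast
    have "vs!i \<noteq> vs!j" using dist i j by (simp add: nth_eq_iff_index_eq)
    then have "(a = vs!i \<and> b = vs!j) \<or> (a = vs!j \<and> b = vs!i)" using ab(1) by (auto simp: doubleton_eq_iff)
    moreover have "\<not> (a = vs!i \<and> b = vs!j)"
    proof
      assume "a = vs!i \<and> b = vs!j"
      then have "dep T r (vs!j) = Suc M" using dep_arc[OF R ab(2)] i by simp
      with mx[OF j(1)] show False by simp
    qed
    ultimately show ?thesis using ab by blast
  qed
  let ?n = "length vs"
  have hd: "hd vs = vs!0" using ne by (simp add: hd_conv_nth)
  have lst: "last vs = vs!(?n - 1)" using ne by (simp add: last_conv_nth)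
  obtain j1 j2 where j: "j1 < ?n" "j2 < ?n" "j1 \<noteq> i" "j2 \<noteq> i" "j1 \<noteq> j2"
    "{vs!i, vs!j1} \<in> uedges T" "{vs!i, vs!j2} \<in> uedges T"
  proof (cases "i = 0")
    case True
    have "{vs!i, vs!1} \<in> uedges T" using adj len True by auto
    moreover have "{vs!i, vs!(?n - 1)} \<in> uedges T" using cl hd lst True by (simp add: insert_commute)
    ultimately show ?thesis using that[of 1 "?n - 1"] len True by auto
  next
    case False
    show ?thesis
    proof (cases "i = ?n - 1")
      case True
      have "{vs!(?n - 2), vs!(Suc (?n - 2))} \<in> uedges T" using adj len by auto
      moreover have "Suc (?n - 2) = i" using True len by auto
      ultimately have e1: "{vs!i, vs!(?n - 2)} \<in> uedges T" by (simp add: insert_commute)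
      have "{vs!i, vs!0} \<in> uedges T" using cl hd lst True by simp
      moreover have "?n - 2 \<noteq> ?n - 1" "?n - 2 < ?n" using len by auto
      ultimately show ?thesis using that[of "?n - 2" 0] len True e1 ne by auto
    next
      case F2: False
      have "Suc (i - 1) < ?n" using i False by auto
      then have "{vs!(i - 1), vs!(Suc (i - 1))} \<in> uedges T" using adj by blast
      moreover have "Suc (i - 1) = i" using False by auto
      ultimately have e1: "{vs!i, vs!(i - 1)} \<in> uedges T" by (simp add: insert_commute)
      have e2: "{vs!i, vs!(Suc i)} \<in> uedges T" using adj i F2 by auto
      show ?thesis using that[of "i - 1" "Suc i"] e1 e2 i False F2 by auto
    qed
  qed
  have p1: "(vs!j1, vs!i) \<in> T" using par j by blast
  have p2: "(vs!j2, vs!i) \<in> T" using par j by blast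
  have "vs!i \<in> V" using sub i by auto
  moreover have "vs!i \<noteq> r" using p1 R unfolding rooted_def by blast
  ultimately have "vs!j1 = vs!j2" using p1 p2 R unfolding rooted_def by blast
  then show False using dist j by (simp add: nth_eq_iff_index_eq)
qed

lemma rootedD:
  assumes "rooted V T r"
  shows "finite V" "T \<subseteq> V \<times> V" "r \<in> V" "\<forall>u. (u, r) \<notin> T"
    "\<forall>v\<in>V - {r}. \<exists>!u. (u, v) \<in> T" "\<forall>v\<in>V. (r, v) \<in> T\<^sup>*"
  using assms unfolding rooted_def by blast+

lemma sym_E: "sym {(p, q). p \<in> S \<and> q \<in> S \<and> {p, q} \<in> E}"
  by (auto simp: sym_def insert_commute)

lemma rtrancl_sym_swap: "sym R \<Longrightarrow> (a, b) \<in> R\<^sup>* \<Longrightarrow> (b, a) \<in> R\<^sup>*"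
  by (metis sym_conv_converse_eq rtrancl_converseI)

lemma rooted_out_tree:
  assumes R: "rooted V T r" shows "out_tree V T"
proof -
  note fin = rootedD(1)[OF R] and sub = rootedD(2)[OF R] and rV = rootedD(3)[OF R]
    and nr = rootedD(4)[OF R] and un = rootedD(5)[OF R] and reach = rootedD(6)[OF R]
  let ?E = "{(p, q). p \<in> V \<and> q \<in> V \<and> {p, q} \<in> uedges T}"
  have edges: "\<forall>e\<in>uedges T. \<exists>a b. e = {a, b} \<and> a \<noteq> b \<and> a \<in> V \<and> b \<in> V"
  proof
    fix e assume "e \<in> uedges T"
    then obtain a b where ab: "e = {a, b}" "(a, b) \<in> T" unfolding uedges_def by blast
    then have "a \<noteq> b" using no_loop[OF R, of a] by blast
    moreover have "a \<in> V" "b \<in> V" using ab sub by auto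
    ultimately show "\<exists>a b. e = {a, b} \<and> a \<noteq> b \<and> a \<in> V \<and> b \<in> V" using ab by blast
  qed
  have toE: "(r, v) \<in> ?E\<^sup>*" if "(r, v) \<in> T\<^sup>*" for v
    using that
  proof (induction rule: rtrancl_induct)
    case base then show ?case by simp
  next
    case (step y z)
    have "(y, z) \<in> ?E" using step(2) sub unfolding uedges_def by blast
    with step(3) show ?case by (rule rtrancl_into_rtrancl)
  qed
  have conn: "uconnected V (uedges T)"
    unfolding uconnected_def
  proof (intro ballI)
    fix i j assume "i \<in> V" "j \<in> V"
    then have "(r, i) \<in> ?E\<^sup>*" "(r, j) \<in> ?E\<^sup>*" using toE reach by auto
    then have ir: "(i, r) \<in> ?E\<^sup>*" using rtrancl_sym_swap[OF sym_E[of V "uedges T"]] by blast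
    show "(i, j) \<in> ?E\<^sup>*" by (rule rtrancl_trans[OF ir \<open>(r, j) \<in> ?E\<^sup>*\<close>])
  qed
  have "V \<noteq> {}" using rV by blast
  then have "utree V (uedges T)" using fin edges conn no_ucycle[OF R] unfolding utree_def by blast
  moreover have "indeg T r = 0" unfolding indeg_def using nr by simp
  moreover have "\<forall>v\<in>V - {r}. indeg T v = 1"
  proof
    fix v assume "v \<in> V - {r}"
    then obtain u where "(u, v) \<in> T" "\<forall>u'. (u', v) \<in> T \<longrightarrow> u' = u" using un by blast
    then have "{u. (u, v) \<in> T} = {u}" by blast
    then show "indeg T v = 1" unfolding indeg_def by simp
  qed
  ultimately show ?thesis unfolding out_tree_def using sub rV by blast
qed

lemma out_tree_rooted:
  assumes O: "out_tree V T" shows "\<exists>r. rooted V T r"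
proof -
  have sub: "T \<subseteq> V \<times> V" using O unfolding out_tree_def by blast
  have ut: "utree V (uedges T)" using O unfolding out_tree_def by blast
  have fin: "finite V" using ut unfolding utree_def by blast
  have conn: "uconnected V (uedges T)" using ut unfolding utree_def by blast
  from O obtain r where rV: "r \<in> V" and i0: "indeg T r = 0" and i1: "\<forall>v\<in>V - {r}. indeg T v = 1"
    unfolding out_tree_def by blast
  have finin: "finite {u. (u, v) \<in> T}" for v
  proof (rule finite_subset[OF _ fin])
    show "{u. (u, v) \<in> T} \<subseteq> V" using sub by blast
  qed
  have "{u. (u, r) \<in> T} = {}" using i0 finin[of r] unfolding indeg_def by simp
  then have nr: "\<forall>u. (u, r) \<notin> T" by blast
  have un: "\<forall>v\<in>V - {r}. \<exists>!u. (u, v) \<in> T"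
  proof
    fix v assume "v \<in> V - {r}"
    then have "indeg T v = 1" using i1 by blast
    then have "card {u. (u, v) \<in> T} = 1" unfolding indeg_def .
    then obtain u where "{u. (u, v) \<in> T} = {u}" by (rule card_1_singletonE)
    then have h: "\<And>w. (w, v) \<in> T \<longleftrightarrow> w = u" by (simp add: set_eq_iff)
    show "\<exists>!u. (u, v) \<in> T" by (rule ex1I[of _ u]) (simp_all add: h)
  qed
  let ?E = "{(p, q). p \<in> V \<and> q \<in> V \<and> {p, q} \<in> uedges T}"
  have reach: "(r, v) \<in> T\<^sup>*" if "(r, v) \<in> ?E\<^sup>*" for v
    using that
  proof (induction rule: rtrancl_induct)
    case base then show ?case by simp
  next
    case (step y z)
    from step(2) have yV: "y \<in> V" and "{y, z} \<in> uedges T" by auto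
    then obtain a b where ab: "{y, z} = {a, b}" "(a, b) \<in> T" unfolding uedges_def by blast
    then have "(y, z) \<in> T \<or> (z, y) \<in> T" by (metis doubleton_eq_iff)
    then show ?case
    proof
      assume "(y, z) \<in> T" with step(3) show ?thesis by (rule rtrancl.rtrancl_into_rtrancl)
    next
      assume zy: "(z, y) \<in> T"
      then have yr: "y \<noteq> r" using nr by blast
      with step(3) obtain q where q: "(r, q) \<in> T\<^sup>*" "(q, y) \<in> T" by (metis rtranclE)
      have "\<exists>!u. (u, y) \<in> T" using un yr yV by blast
      then have "q = z" using zy q(2) by blast
      with q show ?thesis by simp
    qed
  qed
  have allr: "\<forall>v\<in>V. (r, v) \<in> T\<^sup>*"
  proof
    fix v assume "v \<in> V"
    then have "(r, v) \<in> ?E\<^sup>*" using conn rV unfolding uconnected_def by blast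
    then show "(r, v) \<in> T\<^sup>*" by (rule reach)
  qed
  have "rooted V T r" unfolding rooted_def using fin sub rV nr un allr by (intro conjI)
  then show ?thesis by blast
qed

lemma rooted_out_root:
  assumes R: "rooted V T r" shows "out_root V T = r"
proof -
  note fin = rootedD(1)[OF R] and sub = rootedD(2)[OF R] and rV = rootedD(3)[OF R]
    and nr = rootedD(4)[OF R] and un = rootedD(5)[OF R] and reach = rootedD(6)[OF R]
  have "{u. (u, r) \<in> T} = {}" using nr by blast
  then have r0: "indeg T r = 0" unfolding indeg_def by simp
  have uq: "x = r" if x: "x \<in> V" "indeg T x = 0" for x
  proof (rule ccontr)
    assume "x \<noteq> r"
    then have "\<exists>!u. (u, x) \<in> T" using un x(1) by blast
    then obtain u where u: "(u, x) \<in> T" by blast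
    have "{u. (u, x) \<in> T} \<subseteq> V" using sub by blast
    then have "finite {u. (u, x) \<in> T}" using fin by (rule finite_subset)
    moreover have "{u. (u, x) \<in> T} \<noteq> {}" using u by blast
    ultimately have "indeg T x \<noteq> 0" unfolding indeg_def by simp
    with x(2) show False by simp
  qed
  show ?thesis unfolding out_root_def
    by (rule the_equality) (use rV r0 uq in blast)+
qed

lemma one_change_rooted:
  assumes R: "rooted V T r" and aV: "a \<in> V" and bV: "b \<in> V" and br: "b \<noteq> r"
    and nba: "(b, a) \<notin> T\<^sup>*"
  shows "rooted V (one_change T (a, b)) r"
proof -
  let ?T = "one_change T (a, b)"
  note fin = rootedD(1)[OF R] and sub = rootedD(2)[OF R] and rV = rootedD(3)[OF R]
    and nr = rootedD(4)[OF R] and un = rootedD(5)[OF R] and reach = rootedD(6)[OF R]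
  have arcs: "(x, y) \<in> ?T \<longleftrightarrow> ((x, y) \<in> T \<and> y \<noteq> b) \<or> (x = a \<and> y = b)" for x y
    unfolding one_change_def by auto
  have sub': "?T \<subseteq> V \<times> V" unfolding one_change_def using sub aV bV by auto
  have nr': "\<forall>u. (u, r) \<notin> ?T"
  proof
    fix u show "(u, r) \<notin> ?T" unfolding arcs using nr br by simp
  qed
  have un': "\<forall>v\<in>V - {r}. \<exists>!u. (u, v) \<in> ?T"
  proof
    fix v assume v: "v \<in> V - {r}"
    show "\<exists>!u. (u, v) \<in> ?T"
    proof (cases "v = b")
      case True
      show ?thesis
      proof (rule ex1I[of _ a])
        show "(a, v) \<in> ?T" using arcs True by blast
        show "\<And>u. (u, v) \<in> ?T \<Longrightarrow> u = a" using arcs True by blast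
      qed
    next
      case False
      then obtain u where u: "(u, v) \<in> T" "\<And>u'. (u', v) \<in> T \<Longrightarrow> u' = u" using un v by blast
      show ?thesis
      proof (rule ex1I[of _ u])
        show "(u, v) \<in> ?T" using arcs u False by blast
        show "\<And>w. (w, v) \<in> ?T \<Longrightarrow> w = u" using arcs u False by blast
      qed
    qed
  qed
  have avoid: "(r, v) \<in> ?T\<^sup>*" if "(r, v) \<in> T\<^sup>*" "(b, v) \<notin> T\<^sup>*" for v
    using that
  proof (induction rule: rtrancl_induct)
    case base then show ?case by simp
  next
    case (step y z)
    have zb: "z \<noteq> b" using step.prems by auto
    have "(b, y) \<notin> T\<^sup>*"
    proof
      assume "(b, y) \<in> T\<^sup>*"
      then have "(b, z) \<in> T\<^sup>*" using step(2) by (rule rtrancl.rtrancl_into_rtrancl)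
      with step.prems show False by blast
    qed
    then have "(r, y) \<in> ?T\<^sup>*" using step.IH by blast
    moreover have "(y, z) \<in> ?T" using arcs step(2) zb by blast
    ultimately show ?case by (rule rtrancl.rtrancl_into_rtrancl)
  qed
  have rb: "(r, b) \<in> ?T\<^sup>*"
  proof -
    have "(r, a) \<in> T\<^sup>*" using reach aV by blast
    then have "(r, a) \<in> ?T\<^sup>*" using avoid nba by blast
    moreover have "(a, b) \<in> ?T" using arcs by blast
    ultimately show ?thesis by (rule rtrancl.rtrancl_into_rtrancl)
  qed
  have below: "(r, v) \<in> ?T\<^sup>*" if "(b, v) \<in> T\<^sup>*" for v
    using that
  proof (induction rule: rtrancl_induct)
    case base then show ?case using rb .
  next
    case (step y z)
    have "dep T r b \<le> dep T r y" using dep_mono[OF R step(1)] .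
    moreover have "dep T r z = Suc (dep T r y)" using dep_arc[OF R step(2)] .
    ultimately have "z \<noteq> b" by auto
    then have "(y, z) \<in> ?T" using step(2) arcs by blast
    with step(3) show ?case by (rule rtrancl.rtrancl_into_rtrancl)
  qed
  have "\<forall>v\<in>V. (r, v) \<in> ?T\<^sup>*"
  proof
    fix v assume "v \<in> V"
    then have "(r, v) \<in> T\<^sup>*" using reach by blast
    then show "(r, v) \<in> ?T\<^sup>*" using avoid below by blast
  qed
  then show ?thesis unfolding rooted_def using fin sub' rV nr' un' by blast
qed

lemma Head_Back_iff:
  "x \<in> Head (Back A T i) \<longleftrightarrow> (\<exists>a'. (a', x) \<in> A \<and> prec T x i \<and> preceq T i a')"
proof
  assume "x \<in> Head (Back A T i)"
  then obtain e where "e \<in> Back A T i" "x = snd e" unfolding Head_def by blast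
  then show "\<exists>a'. (a', x) \<in> A \<and> prec T x i \<and> preceq T i a'" unfolding Back_def by auto
next
  assume "\<exists>a'. (a', x) \<in> A \<and> prec T x i \<and> preceq T i a'"
  then obtain a' where h: "(a', x) \<in> A" "prec T x i" "preceq T i a'" by blast
  then have "(a', x) \<in> Back A T i" unfolding Back_def by simp
  then show "x \<in> Head (Back A T i)" unfolding Head_def by force
qed

lemma outdeg0_iff:
  assumes "finite V" "T \<subseteq> V \<times> V"
  shows "outdeg T v = 0 \<longleftrightarrow> (\<forall>w. (v, w) \<notin> T)"
proof -
  have "{w. (v, w) \<in> T} \<subseteq> V" using assms(2) by blast
  then have "finite {w. (v, w) \<in> T}" using assms(1) by (rule finite_subset)
  then show ?thesis unfolding outdeg_def by simp
qed

lemma Leaf_eq: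
  assumes "finite V" "T \<subseteq> V \<times> V"
  shows "Leaf V T = {v \<in> V. \<forall>w. (v, w) \<notin> T}"
  unfolding Leaf_def using outdeg0_iff[OF assms] by blast

definition bag :: "'a set \<Rightarrow> ('a \<times> 'a) set \<Rightarrow> ('a \<times> 'a) set \<Rightarrow> 'a \<Rightarrow> 'a set" where
  "bag V A T = (\<lambda>v. {v} \<union> {u. (u, v) \<in> T} \<union> BrSucc T \<union> Leaf V T \<union> Head (Back A T v))"

lemma bag_iff:
  "x \<in> bag V A T v \<longleftrightarrow> x = v \<or> (x, v) \<in> T \<or> x \<in> BrSucc T \<or> x \<in> Leaf V T \<or> x \<in> Head (Back A T v)"
  unfolding bag_def by simp

lemma arc_covered:
  assumes dg: "digraph V A" and opt: "one_optimal V A T" and R: "rooted V T r"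
    and ab: "(a, b) \<in> A"
  shows "\<exists>i\<in>V. a \<in> bag V A T i \<and> b \<in> bag V A T i"
proof -
  note fin = rootedD(1)[OF R] and sub = rootedD(2)[OF R] and rV = rootedD(3)[OF R]
    and nr = rootedD(4)[OF R] and un = rootedD(5)[OF R] and reach = rootedD(6)[OF R]
  have AV: "A \<subseteq> V \<times> V" using dg unfolding digraph_def by blast
  have aV: "a \<in> V" and bV: "b \<in> V" using ab AV by auto
  have self: "v \<in> bag V A T v" for v unfolding bag_iff by simp
  have glob: "w \<in> bag V A T v" if "w \<in> BrSucc T \<or> w \<in> Leaf V T" for v w
    using that unfolding bag_iff by blast
  show ?thesis
  proof (cases "b \<in> BrSucc T \<or> b \<in> Leaf V T")
    case True then show ?thesis using aV self glob by blast
  next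
    case nb: False
    show ?thesis
    proof (cases "a \<in> Leaf V T")
      case True then show ?thesis using bV self glob by blast
    next
      case na: False
      show ?thesis
      proof (cases "(a, b) \<in> T")
        case True
        then have "a \<in> bag V A T b" unfolding bag_iff by blast
        then show ?thesis using bV self by blast
      next
        case nT: False
        show ?thesis
        proof (cases "(b, a) \<in> T\<^sup>*")
          case ba: True
          show ?thesis
          proof (cases "a = b")
            case True then show ?thesis using aV self by blast
          next
            case False
            have "prec T b a" using ba False unfolding prec_def preceq_def by blast
            moreover have "preceq T a a" unfolding preceq_def by simp
            ultimately have "b \<in> Head (Back A T a)" unfolding Head_Back_iff using ab by blast
            then have "b \<in> bag V A T a" unfolding bag_iff by blast
            then show ?thesis using aV self by blast
          qed
        next
          case nba: False
          have br: "b \<noteq> r" using nba reach aV by blast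
          have "\<exists>!u. (u, b) \<in> T" using un bV br by blast
          then obtain p where p: "(p, b) \<in> T" and puq: "\<And>u. (u, b) \<in> T \<Longrightarrow> u = p" by blast
          have "\<not> branch_vertex T p" using nb p unfolding BrSucc_def by blast
          then have od: "outdeg T p < 2" unfolding branch_vertex_def by simp
          have pch: "w = b" if "(p, w) \<in> T" for w
          proof (rule ccontr)
            assume "w \<noteq> b"
            have "{w. (p, w) \<in> T} \<subseteq> V" using sub by blast
            then have "finite {w. (p, w) \<in> T}" using fin by (rule finite_subset)
            moreover have "{b, w} \<subseteq> {w. (p, w) \<in> T}" using p that by blast
            ultimately have "card {b, w} \<le> outdeg T p" unfolding outdeg_def by (rule card_mono)
            with \<open>w \<noteq> b\<close> od show False by simp
          qed
          have aleaf: "\<exists>w. (a, w) \<in> T" using na aV Leaf_eq[OF fin sub] by blast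
          have pa: "p \<noteq> a" using nT p by blast
          let ?T = "one_change T (a, b)"
          have arcs: "(x, y) \<in> ?T \<longleftrightarrow> ((x, y) \<in> T \<and> y \<noteq> b) \<or> (x = a \<and> y = b)" for x y
            unfolding one_change_def by auto
          have R': "rooted V ?T r" using one_change_rooted[OF R aV bV br nba] .
          have sub': "?T \<subseteq> V \<times> V" using rootedD(2)[OF R'] .
          have TA: "T \<subseteq> A" using opt unfolding one_optimal_def out_branching_def by blast
          have "?T \<subseteq> A" unfolding one_change_def using TA ab by blast
          then have ob: "out_branching V A ?T"
            unfolding out_branching_def using rooted_out_tree[OF R'] by blast
          have root: "out_root V T = r" using rooted_out_root[OF R] .
          have allopt: "\<forall>(a, b) \<in> A - T. b \<noteq> out_root V T \<longrightarrow>
              out_branching V A (one_change T (a, b)) \<longrightarrow>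
              \<not> card (Leaf V (one_change T (a, b))) > card (Leaf V T)"
            using opt unfolding one_optimal_def by (rule conjunct2)
          have abAT: "(a, b) \<in> A - T" using ab nT by blast
          have "b \<noteq> out_root V T \<longrightarrow> out_branching V A ?T \<longrightarrow>
              \<not> card (Leaf V ?T) > card (Leaf V T)"
            using bspec[OF allopt abAT] by (simp only: prod.case)
          then have notgt: "\<not> card (Leaf V ?T) > card (Leaf V T)"
            using br root ob by blast
          have L': "Leaf V ?T = insert p (Leaf V T)"
          proof -
            have "(\<forall>w. (x, w) \<notin> ?T) \<longleftrightarrow> x = p \<or> (\<forall>w. (x, w) \<notin> T)" for x
            proof
              assume h: "\<forall>w. (x, w) \<notin> ?T"
              show "x = p \<or> (\<forall>w. (x, w) \<notin> T)"
              proof (cases "x = p")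
                case True then show ?thesis by blast
              next
                case xp: False
                have "\<forall>w. (x, w) \<notin> T"
                proof (intro allI notI)
                  fix w assume xw: "(x, w) \<in> T"
                  show False
                  proof (cases "w = b")
                    case True then show False using puq xw xp by blast
                  next
                    case False then show False using h xw arcs by blast
                  qed
                qed
               then show ?thesis by blast
              qed
            next
              assume "x = p \<or> (\<forall>w. (x, w) \<notin> T)"
              then show "\<forall>w. (x, w) \<notin> ?T"
              proof
                assume "x = p" then show ?thesis using pch pa arcs by blast
              next
                assume h: "\<forall>w. (x, w) \<notin> T"
                then have "x \<noteq> a" using aleaf by blast
                then show ?thesis using h arcs by blast
              qed
            qed
            moreover have "p \<in> V" using p sub by blast
            ultimately show ?thesis unfolding Leaf_eq[OF fin sub] Leaf_eq[OF fin sub'] by auto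
          qed
          have pnl: "p \<notin> Leaf V T" using p Leaf_eq[OF fin sub] by blast
          have "finite (Leaf V T)" unfolding Leaf_def using fin by simp
          then have "card (Leaf V ?T) = Suc (card (Leaf V T))" unfolding L' using pnl by simp
          with notgt show ?thesis by simp
        qed
      qed
    qed
  qed
qed

lemma bag_connected:
  assumes dg: "digraph V A" and R: "rooted V T r" and xV: "x \<in> V"
  shows "uconnected {i \<in> V. x \<in> bag V A T i} (uedges T)"
proof (cases "x \<in> BrSucc T \<or> x \<in> Leaf V T")
  case True
  then have "{i \<in> V. x \<in> bag V A T i} = V" unfolding bag_iff by blast
  moreover have "uconnected V (uedges T)"
    using rooted_out_tree[OF R] unfolding out_tree_def utree_def by blast
  ultimately show ?thesis by simp
next
  case nglob: False
  note sub = rootedD(2)[OF R]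
  define S where "S = {i \<in> V. x \<in> bag V A T i}"
  let ?E = "{(p, q). p \<in> S \<and> q \<in> S \<and> {p, q} \<in> uedges T}"
  have xS: "x \<in> S" unfolding S_def bag_iff using xV by simp
  have memS: "i \<in> S \<longleftrightarrow> i \<in> V \<and> (i = x \<or> (x, i) \<in> T \<or> x \<in> Head (Back A T i))" for i
    unfolding S_def bag_iff using nglob by blast
  have edge: "{p, q} \<in> uedges T" if "(p, q) \<in> T" for p q
    unfolding uedges_def using that by blast
  have toS: "(x, i) \<in> ?E\<^sup>*" if iS: "i \<in> S" for i
  proof -
    have "i = x \<or> (x, i) \<in> T \<or> x \<in> Head (Back A T i)" using iS memS by blast
    then show ?thesis
    proof (elim disjE)
      assume "i = x" then show ?thesis by simp
    next
      assume xi: "(x, i) \<in> T"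
      then have "(x, i) \<in> ?E" using xS iS edge by blast
      then show ?thesis by blast
    next
      assume "x \<in> Head (Back A T i)"
      then obtain a' where a': "(a', x) \<in> A" "prec T x i" "preceq T i a'"
        unfolding Head_Back_iff by blast
      have gen: "(x, v) \<in> ?E\<^sup>*" if "(x, v) \<in> T\<^sup>*" "(v, a') \<in> T\<^sup>*" for v
        using that
      proof (induction rule: rtrancl_induct)
        case base then show ?case by simp
      next
        case (step y z)
        have ya: "(y, a') \<in> T\<^sup>*" using step(2) step.prems by (rule converse_rtrancl_into_rtrancl)
        have inS: "w \<in> S" if "(x, w) \<in> T\<^sup>*" "(w, a') \<in> T\<^sup>*" "w \<in> V" for w
        proof (cases "w = x")
          case True then show ?thesis using xS by simp
        next
          case False
          then have "prec T x w" "preceq T w a'" using that unfolding prec_def preceq_def by auto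
          then have "x \<in> Head (Back A T w)" unfolding Head_Back_iff using a'(1) by blast
          then show ?thesis using memS that(3) by blast
        qed
        have yV: "y \<in> V" "z \<in> V" using step(2) sub by auto
        have "y \<in> S" using inS step(1) ya yV by blast
        moreover have "z \<in> S"
          using inS step(1) step(2) step.prems yV by (meson rtrancl.rtrancl_into_rtrancl)
        ultimately have "(y, z) \<in> ?E" using edge step(2) by blast
        moreover have "(x, y) \<in> ?E\<^sup>*" using step.IH ya by blast
        ultimately show ?case by (meson rtrancl.rtrancl_into_rtrancl)
      qed
      have "(x, i) \<in> T\<^sup>*" "(i, a') \<in> T\<^sup>*" using a'(2,3) unfolding prec_def preceq_def by auto
      then show ?thesis using gen by blast
    qed
  qed
  have "uconnected S (uedges T)"
    unfolding uconnected_def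
  proof (intro ballI)
    fix i j assume "i \<in> S" "j \<in> S"
    then have xi: "(x, i) \<in> ?E\<^sup>*" and xj: "(x, j) \<in> ?E\<^sup>*" using toS by auto
    have ix: "(i, x) \<in> ?E\<^sup>*" using rtrancl_sym_swap[OF sym_E[of S "uedges T"] xi] .
    show "(i, j) \<in> ?E\<^sup>*" by (rule rtrancl_trans[OF ix xj])
  qed
  then show ?thesis unfolding S_def .
qed

theorem lemma1:
  assumes "digraph V A"
    and "one_optimal V A T"
  shows "tree_decomposition V A V (uedges T)
           (\<lambda>v. {v} \<union> {u. (u, v) \<in> T} \<union> BrSucc T \<union> Leaf V T \<union> Head (Back A T v))"
proof -
  have "out_tree V T" using assms(2) unfolding one_optimal_def out_branching_def by blast
  then obtain r where R: "rooted V T r" using out_tree_rooted by blast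
  note fin = rootedD(1)[OF R] and sub = rootedD(2)[OF R]
  have AV: "A \<subseteq> V \<times> V" using assms(1) unfolding digraph_def by blast
  have ut: "utree V (uedges T)" using rooted_out_tree[OF R] unfolding out_tree_def by blast
  have bsub: "bag V A T i \<subseteq> V" if "i \<in> V" for i
  proof
    fix w assume "w \<in> bag V A T i"
    then have "w = i \<or> (w, i) \<in> T \<or> w \<in> BrSucc T \<or> w \<in> Leaf V T \<or> w \<in> Head (Back A T i)"
      unfolding bag_iff .
    then show "w \<in> V"
    proof (elim disjE)
      assume "w \<in> BrSucc T" then show ?thesis using sub unfolding BrSucc_def by blast
    next
      assume "w \<in> Leaf V T" then show ?thesis unfolding Leaf_def by blast
    next
      assume "w \<in> Head (Back A T i)"
      then obtain a' where "(a', w) \<in> A" unfolding Head_Back_iff by blast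
      then show ?thesis using AV by blast
    qed (use that sub in blast)+
  qed
  have self: "v \<in> bag V A T v" for v unfolding bag_iff by simp
  have "tree_decomposition V A V (uedges T) (bag V A T)"
    unfolding tree_decomposition_def
  proof (intro conjI)
    show "utree V (uedges T)" by (rule ut)
    show "\<forall>i\<in>V. bag V A T i \<subseteq> V" using bsub by blast
    show "(\<Union>i\<in>V. bag V A T i) = V" using bsub self by blast
    show "\<forall>(x, y)\<in>A. \<exists>i\<in>V. x \<in> bag V A T i \<and> y \<in> bag V A T i"
      using arc_covered[OF assms(1,2) R] by blast
    show "\<forall>x\<in>V. uconnected {i \<in> V. x \<in> bag V A T i} (uedges T)"
      using bag_connected[OF assms(1) R] by blast
  qed
  then show ?thesis unfolding bag_def .
qed

end
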